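(* Let $A$ be an $m$-dimensional binary array of size $n_1\times\cdots\times n_m$ and $\mathbb{A}$ its periodic extension to $\mathbb{Z}^m$. If some toroidal vector $\langle h_1,\dots,h_m\rangle$ occurs at least twice in $\mathcal{T}_A$ and $h_i\neq n_i/2$ for every $i\in[m]$ (i.e. it is not in $\mathcal{H}_A$), then there is an $n_1\times\cdots\times n_m$ window of $\mathbb{A}$ having a repeated difference vector (i.e. two distinct ordered pairs of distinct dots in the window with the same difference vector).
   Context: For $n\in\mathbb{N}$, $[n]=\{1,\dots,n\}$. An $m$-dimensional binary array of size $n_1\times\cdots\times n_m$ ($m\ge2$, all $n_i\ge 2$) is a function $A:\Lambda\to\{0,1\}$ with $\Lambda=[n_1]\times\cdots\times[n_m]$; a dot is a point where $A$ equals 1. The periodic extension $\mathbb{A}:\mathbb{Z}^m\to\{0,1\}$ is $\mathbb{A}(a_1,\dots,a_m)=A(a_1',\dots,a_m')$ where $a_i'\in[n_i]$, $a_i'\equiv a_i\pmod{n_i}$. An $n_1\times\cdots\times n_m$ window of $\mathbb{A}$ is the restriction of $\mathbb{A}$ to a box $\prod_i\{k_i,\dots,k_i+n_i-1\}$, $k_i\in\mathbb{Z}$. The difference vector from a dot $\alpha=(a_1,\dots,a_m)$ to a distinct dot $\omega=(w_1,\dots,w_m)$ is $\langle w_1-a_1,\dots,w_m-a_m\rangle\in\mathbb{Z}^m$; the toroidal vector is $\langle (w_1-a_1)\bmod n_1,\dots,(w_m-a_m)\bmod n_m\rangle\in\mathbb{Z}_{n_1}\times\cdots\times\mathbb{Z}_{n_m}$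 (components taken in $\{0,\dots,n_i-1\}$). $\mathcal{T}_A$ is the multiset of toroidal vectors over all ordered pairs of distinct dots of $A$, and $\mathcal{H}_A$ is the sub-multiset of those $\langle h_1,\dots,h_m\rangle$ with $h_i=n_i/2$ for some $i\in[m]$. *)

theory Defs
  imports Main "HOL-Library.Multiset"
begin

type_synonym point = "nat \<Rightarrow> int"

text \<open>Points of Z^m are functions nat => int that vanish outside the index set [m] = {1..m}.\<close>
definition Zpts :: "nat \<Rightarrow> point set" where
  "Zpts m = {a. \<forall>i. i \<notin> {1..m} \<longrightarrow> a i = 0}"

definition Lam :: "nat \<Rightarrow> (nat \<Rightarrow> nat) \<Rightarrow> point set" where
  "Lam m n = {a \<in> Zpts m. \<forall>i\<in>{1..m}. 1 \<le> a i \<and> a i \<le> int (n i)}"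

text \<open>A binary array is a function A : Lambda -> {0,1}; we represent it by a predicate
  (True = 1), only its values on Lambda being relevant.\<close>
definition reduce :: "nat \<Rightarrow> (nat \<Rightarrow> nat) \<Rightarrow> point \<Rightarrow> point" where
  "reduce m n a = (\<lambda>i. if i \<in> {1..m} then (a i - 1) mod int (n i) + 1 else 0)"

definition perext :: "nat \<Rightarrow> (nat \<Rightarrow> nat) \<Rightarrow> (point \<Rightarrow> bool) \<Rightarrow> point \<Rightarrow> bool" where
  "perext m n A a = A (reduce m n a)"

definition dots :: "nat \<Rightarrow> (nat \<Rightarrow> nat) \<Rightarrow> (point \<Rightarrow> bool) \<Rightarrow> point set" where
  "dots m n A = {a \<in> Lam m n. A a}"

definition torvec :: "nat \<Rightarrow> (nat \<Rightarrow> nat) \<Rightarrow> point \<Rightarrow> point \<Rightarrow> point" where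
  "torvec m n \<alpha> \<omega> = (\<lambda>i. if i \<in> {1..m} then (\<omega> i - \<alpha> i) mod int (n i) else 0)"

definition diffvec :: "nat \<Rightarrow> point \<Rightarrow> point \<Rightarrow> point" where
  "diffvec m \<alpha> \<omega> = (\<lambda>i. if i \<in> {1..m} then \<omega> i - \<alpha> i else 0)"

definition TA :: "nat \<Rightarrow> (nat \<Rightarrow> nat) \<Rightarrow> (point \<Rightarrow> bool) \<Rightarrow> point multiset" where
  "TA m n A = image_mset (\<lambda>(\<alpha>, \<omega>). torvec m n \<alpha> \<omega>)
      (mset_set {(\<alpha>, \<omega>). \<alpha> \<in> dots m n A \<and> \<omega> \<in> dots m n A \<and> \<alpha> \<noteq> \<omega>})"

definition window :: "nat \<Rightarrow> (nat \<Rightarrow> nat) \<Rightarrow> point \<Rightarrow> point set" where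
  "window m n k = {a \<in> Zpts m. \<forall>i\<in>{1..m}. k i \<le> a i \<and> a i \<le> k i + int (n i) - 1}"

definition window_dots :: "nat \<Rightarrow> (nat \<Rightarrow> nat) \<Rightarrow> (point \<Rightarrow> bool) \<Rightarrow> point \<Rightarrow> point set" where
  "window_dots m n A k = {a \<in> window m n k. perext m n A a}"

definition has_repeated_diffvec :: "nat \<Rightarrow> point set \<Rightarrow> bool" where
  "has_repeated_diffvec m D \<longleftrightarrow>
     (\<exists>\<alpha> \<omega> \<alpha>' \<omega>'. \<alpha> \<in> D \<and> \<omega> \<in> D \<and> \<alpha>' \<in> D \<and> \<omega>' \<in> D \<and>
        \<alpha> \<noteq> \<omega> \<and> \<alpha>' \<noteq> \<omega>' \<and> (\<alpha>, \<omega>) \<noteq> (\<alpha>', \<omega>') \<and>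
        diffvec m \<alpha> \<omega> = diffvec m \<alpha>' \<omega>')"

end

theory Submission
  imports Defs
begin
lemma coord:
  fixes a a' h n :: int
  assumes "n > 0" "0 \<le> h" "h < n" "2*h \<noteq> n"
  shows "\<exists>k. ((a-k) mod n + h < n) = ((a'-k) mod n + h < n)"
proof -
  define t where "t = (a'-a) mod n"
  have t: "0 \<le> t" "t < n" using assms by (auto simp: t_def)
  have neg: "(a-a') mod n = (if t = 0 then 0 else n - t)"
    using zmod_zminus1_eq_if[of "a'-a" n] by (simp add: t_def)
  show ?thesis
  proof (cases "2*h < n")
    case True
    show ?thesis
    proof (cases "t + h < n")
      case True then show ?thesis by (intro exI[of _ a]) (simp add: t_def assms)
    next
      case False
      then have "t \<noteq> 0" using \<open>2*h<n\<close> assms by auto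
      then show ?thesis using False neg \<open>2*h<n\<close> assms t by (intro exI[of _ a']) auto
    qed
  next
    case False
    then have hn: "2*h > n" using assms by auto
    have nh: "(n-h) mod n = n - h" using assms hn by (intro mod_pos_pos_trivial) auto
    have x1: "(a - (a - (n-h))) mod n = n - h" using nh by (simp only: diff_diff_eq2 add.commute[of a] add_diff_cancel_right)
    have e1: "a' - (a - (n-h)) = (a'-a) + (n-h)" by simp
    have x2: "(a' - (a - (n-h))) mod n = (t + (n-h)) mod n"
      unfolding t_def e1 by (rule mod_add_left_eq[symmetric])
    have y1: "(a' - (a' - (n-h))) mod n = n - h" using nh by (simp only: diff_diff_eq2 add.commute[of a'] add_diff_cancel_right)
    have e2: "a - (a' - (n-h)) = (a-a') + (n-h)" by simp
    have y2: "(a - (a' - (n-h))) mod n = ((a-a') mod n + (n-h)) mod n"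
      unfolding e2 by (rule mod_add_left_eq[symmetric])
    show ?thesis
    proof (cases "t < h")
      case True
      have "(t + (n-h)) mod n = t + (n-h)" using True t assms by (intro mod_pos_pos_trivial) auto
      then show ?thesis using x1 x2 True t by (intro exI[of _ "a - (n-h)"]) auto
    next
      case False
      then have "t \<noteq> 0" using hn assms by auto
      then have nt: "(a-a') mod n = n - t" using neg by simp
      have "(n - t + (n-h)) mod n = n - t + (n-h)" using False t assms hn
        by (intro mod_pos_pos_trivial) auto
      then have "((a-a') mod n + (n-h)) mod n = n - t + (n-h)" using nt by simp
      then show ?thesis using y1 y2 False t hn by (intro exI[of _ "a' - (n-h)"]) auto
    qed
  qed
qed

lemma diffmod:
  fixes x y k n :: int
  assumes "n > 0"
  shows "(y-k) mod n - (x-k) mod n = (if (x-k) mod n + (y-x) mod n < n then (y-x) mod n else (y-x) mod n - n)"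
proof -
  have e: "y - k = (x-k) + (y-x)" by simp
  have "(y-k) mod n = ((x-k) mod n + (y-x) mod n) mod n"
    unfolding e by (rule mod_add_eq[symmetric])
  moreover have "0 \<le> (x-k) mod n" "(x-k) mod n < n" "0 \<le> (y-x) mod n" "(y-x) mod n < n"
    using assms by auto
  moreover have "\<And>s. n \<le> s \<Longrightarrow> s < 2*n \<Longrightarrow> s mod n = s - n"
  proof -
    fix s :: int assume "n \<le> s" "s < 2*n"
    then have "(s - n) mod n = s - n" by (intro mod_pos_pos_trivial) auto
    then show "s mod n = s - n" by (simp add: mod_diff_right_eq[symmetric])
  qed
  ultimately show ?thesis
    by (smt (verit) mod_pos_pos_trivial)
qed

lemma count_TA:
  assumes "count (image_mset f (mset_set S)) x \<ge> 2"
  shows "\<exists>p q. p \<in> S \<and> q \<in> S \<and> p \<noteq> q \<and> f p = x \<and> f q = x"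
proof -
  have fin: "finite S" using assms by (cases "finite S") auto
  have "count (image_mset f (mset_set S)) x = card {p \<in> S. f p = x}"
    using fin by (simp add: count_image_mset Int_def conj_commute)
  then have "card {p \<in> S. f p = x} \<ge> 2" using assms by simp
  define X where "X = {p \<in> S. f p = x}"
  have c: "card X \<ge> 2" using \<open>card {p \<in> S. f p = x} \<ge> 2\<close> X_def by simp
  then have "X \<noteq> {}" by auto
  then obtain p where p: "p \<in> X" by blast
  have "finite X" using fin X_def by simp
  then have "card (X - {p}) \<ge> 1" using c p by (simp add: card_Diff_singleton)
  then have "X - {p} \<noteq> {}" by (metis card.empty not_one_le_zero)
  then obtain q where "q \<in> X - {p}" by blast
  then show ?thesis using p X_def by blast
qed

theorem mainTheorem2:
  fixes m :: nat and n :: "nat \<Rightarrow> nat" and A :: "point \<Rightarrow> bool" and h :: point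
  assumes "m \<ge> 2"
    and "\<forall>i\<in>{1..m}. n i \<ge> 2"
    and "count (TA m n A) h \<ge> 2"
    and "\<forall>i\<in>{1..m}. 2 * h i \<noteq> int (n i)"
  shows "\<exists>k \<in> Zpts m. has_repeated_diffvec m (window_dots m n A k)"
proof -
  let ?S = "{(\<alpha>, \<omega>). \<alpha> \<in> dots m n A \<and> \<omega> \<in> dots m n A \<and> \<alpha> \<noteq> \<omega>}"
  obtain p q where pq: "p \<in> ?S" "q \<in> ?S" "p \<noteq> q"
    "(\<lambda>(\<alpha>, \<omega>). torvec m n \<alpha> \<omega>) p = h" "(\<lambda>(\<alpha>, \<omega>). torvec m n \<alpha> \<omega>) q = h"
    using count_TA[OF assms(3)[unfolded TA_def]] by blast
  obtain a w where p: "p = (a, w)" by (cases p)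
  obtain a' w' where q: "q = (a', w')" by (cases q)
  have dots: "a \<in> dots m n A" "w \<in> dots m n A" "a' \<in> dots m n A" "w' \<in> dots m n A"
    "a \<noteq> w" "a' \<noteq> w'" "(a, w) \<noteq> (a', w')"
    using pq p q by auto
  have tv: "torvec m n a w = h" "torvec m n a' w' = h" using pq p q by auto
  have npos: "\<And>i. i \<in> {1..m} \<Longrightarrow> int (n i) > 0" using assms(2) by fastforce
  have hi: "\<And>i. i \<in> {1..m} \<Longrightarrow> h i = (w i - a i) mod int (n i)"
    "\<And>i. i \<in> {1..m} \<Longrightarrow> h i = (w' i - a' i) mod int (n i)"
  proof -
    fix i assume i: "i \<in> {1..m}"
    show "h i = (w i - a i) mod int (n i)" using fun_cong[OF tv(1), of i] i unfolding torvec_def by simp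
    show "h i = (w' i - a' i) mod int (n i)" using fun_cong[OF tv(2), of i] i unfolding torvec_def by simp
  qed
  define P where "P i k = (((a i - k) mod int (n i) + h i < int (n i)) = ((a' i - k) mod int (n i) + h i < int (n i)))" for i k
  have exP: "\<exists>k. P i k" if i: "i \<in> {1..m}" for i
    unfolding P_def
  proof (rule coord)
    show "int (n i) > 0" using npos[OF i] .
    show "0 \<le> h i" "h i < int (n i)" using hi(1)[OF i] npos[OF i] by auto
    show "2 * h i \<noteq> int (n i)" using assms(4) i by auto
  qed
  define k :: point where "k i = (if i \<in> {1..m} then (SOME k. P i k) else 0)" for i
  have kP: "\<And>i. i \<in> {1..m} \<Longrightarrow> P i (k i)" unfolding k_def using exP by (auto intro: someI_ex)
  have kZ: "k \<in> Zpts m" unfolding Zpts_def k_def by auto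
  define rep :: "point \<Rightarrow> point" where
    "rep b = (\<lambda>i. if i \<in> {1..m} then k i + (b i - k i) mod int (n i) else 0)" for b
  have red: "reduce m n (rep b) = b" if "b \<in> Lam m n" for b
  proof
    fix i show "reduce m n (rep b) i = b i"
    proof (cases "i \<in> {1..m}")
      case True
      have "(k i + (b i - k i) mod int (n i) - 1) mod int (n i) = (k i + (b i - k i) - 1) mod int (n i)"
        by (metis mod_add_right_eq mod_diff_left_eq)
      also have "\<dots> = (b i - 1) mod int (n i)" by simp
      also have "\<dots> = b i - 1" proof -
        have "1 \<le> b i \<and> b i \<le> int (n i)" using that True unfolding Lam_def by blast
        then show ?thesis by (intro mod_pos_pos_trivial) auto
      qed
      finally show ?thesis using True unfolding reduce_def rep_def by simp
    next
      case False then show ?thesis using that unfolding reduce_def rep_def Lam_def Zpts_def by auto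
    qed
  qed
  have inwin: "rep b \<in> window_dots m n A k" if "b \<in> dots m n A" for b
  proof -
    have b: "b \<in> Lam m n" "A b" using that unfolding dots_def by auto
    have "rep b \<in> window m n k"
      unfolding window_def Zpts_def rep_def using npos by auto
    moreover have "perext m n A (rep b)" unfolding perext_def using red[OF b(1)] b(2) by simp
    ultimately show ?thesis unfolding window_dots_def by simp
  qed
  have inj: "b = c" if "b \<in> dots m n A" "c \<in> dots m n A" "rep b = rep c" for b c
    using red that unfolding dots_def by (metis (mono_tags, lifting) mem_Collect_eq)
  have dv: "diffvec m (rep a) (rep w) = diffvec m (rep a') (rep w')"
  proof
    fix i show "diffvec m (rep a) (rep w) i = diffvec m (rep a') (rep w') i"
    proof (cases "i \<in> {1..m}")
      case True
      have "diffvec m (rep a) (rep w) i = (w i - k i) mod int (n i) - (a i - k i) mod int (n i)"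
        using True unfolding diffvec_def rep_def by simp
      also have "\<dots> = (if (a i - k i) mod int (n i) + h i < int (n i) then h i else h i - int (n i))"
        using diffmod[OF npos[OF True]] hi(1)[OF True] by simp
      also have "\<dots> = (if (a' i - k i) mod int (n i) + h i < int (n i) then h i else h i - int (n i))"
        using kP[OF True] unfolding P_def by simp
      also have "\<dots> = (w' i - k i) mod int (n i) - (a' i - k i) mod int (n i)"
        using diffmod[OF npos[OF True]] hi(2)[OF True] by simp
      also have "\<dots> = diffvec m (rep a') (rep w') i"
        using True unfolding diffvec_def rep_def by simp
      finally show ?thesis .
    next
      case False then show ?thesis unfolding diffvec_def by auto
    qed
  qed
  have "has_repeated_diffvec m (window_dots m n A k)"
    unfolding has_repeated_diffvec_def
  proof (intro exI conjI)
    show "rep a \<in> window_dots m n A k" "rep w \<in> window_dots m n A k"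
      "rep a' \<in> window_dots m n A k" "rep w' \<in> window_dots m n A k"
      using inwin dots by auto
    show "rep a \<noteq> rep w" "rep a' \<noteq> rep w'" using inj dots by blast+
    show "(rep a, rep w) \<noteq> (rep a', rep w')" using inj dots by blast
    show "diffvec m (rep a) (rep w) = diffvec m (rep a') (rep w')" by (rule dv)
  qed
  then show ?thesis using kZ by blast
qed

end
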